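(* Let $\rho=[uvwx]\subset\mathbb{R}^3$ be a unit rhombus. Suppose there is a coloring $\chi:\mathbb{R}^3\to\{1,2,3\}$ with no rainbow triangles such that $\chi(u)=\chi(v)=1$, $\chi(w)=2$, $\chi(x)=3$. Then $\rho$ cannot be domed.
   Context: A unit rhombus is a closed polygon $[uvwx]$ in $\mathbb{R}^3$ with all four sides of length $1$. A rainbow triangle for $\chi$ is a triple of points $x,y,z\in\mathbb{R}^3$ with $|xy|=|yz|=|zx|=1$ and $\{\chi(x),\chi(y),\chi(z)\}=\{1,2,3\}$. A closed polygon with unit edges can be domed if there is a finite connected 2-dimensional simplicial complex which is a compact surface with a single boundary cycle, with a map to $\mathbb{R}^3$ linear on simplices sending each triangle to a unit equilateral triangle and the boundary cycle onto the polygon vertex by vertex in cyclic order (no embedding/immersion required). *)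

theory Defs
  imports "HOL-Analysis.Analysis"
begin

type_synonym point3 = "real ^ 3"

definition unit_rhombus :: "point3 \<Rightarrow> point3 \<Rightarrow> point3 \<Rightarrow> point3 \<Rightarrow> bool" where
  "unit_rhombus u v w x \<longleftrightarrow>
     dist u v = 1 \<and> dist v w = 1 \<and> dist w x = 1 \<and> dist x u = 1"

definition rainbow_triangle :: "(point3 \<Rightarrow> nat) \<Rightarrow> point3 \<Rightarrow> point3 \<Rightarrow> point3 \<Rightarrow> bool" where
  "rainbow_triangle col x y z \<longleftrightarrow>
     dist x y = 1 \<and> dist y z = 1 \<and> dist z x = 1 \<and> {col x, col y, col z} = {1, 2, 3}"

text \<open>Abstract 2-dimensional simplicial complexes, given by their set of triangles
  (3-element vertex sets). Vertices and edges are those of the triangles (pure complex).\<close>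

definition cx_vertices :: "'v set set \<Rightarrow> 'v set" where
  "cx_vertices T = \<Union>T"

definition cx_edges :: "'v set set \<Rightarrow> 'v set set" where
  "cx_edges T = {e. card e = 2 \<and> (\<exists>t\<in>T. e \<subseteq> t)}"

definition edge_degree :: "'v set set \<Rightarrow> 'v set \<Rightarrow> nat" where
  "edge_degree T e = card {t\<in>T. e \<subseteq> t}"

definition boundary_edges :: "'v set set \<Rightarrow> 'v set set" where
  "boundary_edges T = {e\<in>cx_edges T. edge_degree T e = 1}"

text \<open>Finite connected 2-dim simplicial complex that is a compact surface (possibly with
  boundary): every edge lies in one or two triangles and the link of every vertex is
  connected (hence a path or a cycle).\<close>

definition compact_surface_complex :: "'v set set \<Rightarrow> bool" where
  "compact_surface_complex T \<longleftrightarrow>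
     finite T \<and> T \<noteq> {} \<and> (\<forall>t\<in>T. card t = 3) \<and>
     (\<forall>e\<in>cx_edges T. edge_degree T e = 1 \<or> edge_degree T e = 2) \<and>
     (\<forall>a\<in>cx_vertices T. \<forall>b\<in>cx_vertices T. (\<lambda>x y. {x, y} \<in> cx_edges T)\<^sup>*\<^sup>* a b) \<and>
     (\<forall>v\<in>cx_vertices T. \<forall>a b. {v, a} \<in> cx_edges T \<longrightarrow> {v, b} \<in> cx_edges T \<longrightarrow>
         (\<lambda>x y. {v, x, y} \<in> T)\<^sup>*\<^sup>* a b)"

definition can_be_domed :: "point3 list \<Rightarrow> bool" where
  "can_be_domed P \<longleftrightarrow>
     (\<exists>(T :: nat set set) (f :: nat \<Rightarrow> point3) (b :: nat list).
        compact_surface_complex T \<and>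
        (\<forall>t\<in>T. \<forall>p\<in>t. \<forall>q\<in>t. p \<noteq> q \<longrightarrow> dist (f p) (f q) = 1) \<and>
        length b = length P \<and> distinct b \<and>
        boundary_edges T = {{b ! i, b ! ((i + 1) mod length b)} | i. i < length b} \<and>
        (\<forall>i < length b. f (b ! i) = P ! i))"

end

theory Submission
  imports Defs
begin

lemma two_subsets:
  assumes "a\<noteq>b" "a\<noteq>c" "b\<noteq>c"
  shows "{e. e \<subseteq> {a,b,c} \<and> card e = 2} = {{a,b},{a,c},{b,c}}"
proof (rule set_eqI, rule iffI)
  fix e assume "e \<in> {e. e \<subseteq> {a,b,c} \<and> card e = 2}"
  then obtain p q where "e = {p,q}" "p\<noteq>q" "p\<in>{a,b,c}" "q\<in>{a,b,c}"
    by (auto simp: card_2_iff)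
  then show "e \<in> {{a,b},{a,c},{b,c}}" by auto
next
  fix e assume "e \<in> {{a,b},{a,c},{b,c}}"
  then show "e \<in> {e. e \<subseteq> {a,b,c} \<and> card e = 2}" using assms by auto
qed

lemma four_set: "{F i | i::nat. i < 4} = {F 0, F 1, F 2, F 3}"
proof -
  have a: "{..<4::nat} = {0,1,2,3}" by auto
  have "{F i | i::nat. i < 4} = F ` {..<4}" by auto
  then show ?thesis unfolding a by simp
qed

lemma tri_even:
  fixes g :: "'a \<Rightarrow> nat"
  assumes d: "a\<noteq>b" "a\<noteq>c" "b\<noteq>c" and nr: "{g a, g b, g c} \<noteq> {1,2,3}"
    and r: "g a \<in> {1,2,3}" "g b \<in> {1,2,3}" "g c \<in> {1,2,3}"
  shows "even (card {e. e \<subseteq> {a,b,c} \<and> card e = 2 \<and> (\<exists>p\<in>e. g p = 1) \<and> (\<exists>q\<in>e. g q = 2)})"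
proof -
  let ?P = "\<lambda>e. (\<exists>p\<in>e. g p = 1) \<and> (\<exists>q\<in>e. g q = 2)"
  have "{e. e \<subseteq> {a,b,c} \<and> card e = 2 \<and> ?P e} = {e\<in>{{a,b},{a,c},{b,c}}. ?P e}"
    using two_subsets[OF d] by blast
  hence "card {e. e \<subseteq> {a,b,c} \<and> card e = 2 \<and> ?P e} = (\<Sum>e\<in>{{a,b},{a,c},{b,c}}. if ?P e then 1 else 0)"
    by (simp add: sum.inter_filter[symmetric])
  also have "\<dots> = (if ?P {a,b} then 1 else 0) + (if ?P {a,c} then 1 else 0) + (if ?P {b,c} then 1 else 0)"
    using d by (simp add: doubleton_eq_iff)
  finally show ?thesis using nr r by auto
qed


theorem proposition5p9:
  fixes u v w x :: point3 and col :: "point3 \<Rightarrow> nat"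
  assumes "unit_rhombus u v w x"
    and "\<forall>p. col p \<in> {1, 2, 3}"
    and "\<forall>p q r. \<not> rainbow_triangle col p q r"
    and "col u = 1" and "col v = 1" and "col w = 2" and "col x = 3"
  shows "\<not> can_be_domed [u, v, w, x]"
proof
  assume "can_be_domed [u, v, w, x]"
  then obtain T :: "nat set set" and f b where
    cs: "compact_surface_complex T" and tri: "\<forall>t\<in>T. \<forall>p\<in>t. \<forall>q\<in>t. p \<noteq> q \<longrightarrow> dist (f p) (f q) = 1"
    and lb0: "length b = length [u, v, w, x]" and db: "distinct b"
    and bd: "boundary_edges T = {{b ! i, b ! ((i + 1) mod length b)} | i. i < length b}"
    and fb: "\<forall>i < length b. f (b ! i) = [u, v, w, x] ! i"
    unfolding can_be_domed_def by (elim exE conjE) (rule that; assumption)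
  have lb: "length b = 4" using lb0 by simp
  define g where "g = (\<lambda>p. col (f p))"
  define P where "P = (\<lambda>e. (\<exists>p\<in>e. g p = (1::nat)) \<and> (\<exists>q\<in>e. g q = 2))"
  define E where "E = {e\<in>cx_edges T. P e}"
  have finT: "finite T" and c3: "\<forall>t\<in>T. card t = 3" using cs unfolding compact_surface_complex_def by auto
  have finU: "finite (\<Union>T)" using finT c3 by (metis card.infinite finite_Union zero_neq_numeral)
  have "cx_edges T \<subseteq> Pow (\<Union>T)" unfolding cx_edges_def by auto
  hence finCE: "finite (cx_edges T)" using finU by (meson finite_Pow_iff finite_subset)
  hence finE: "finite E" unfolding E_def by auto
  have "(\<Sum>e\<in>E. edge_degree T e) = (\<Sum>e\<in>E. \<Sum>t\<in>T. if e \<subseteq> t then 1 else 0)"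
    unfolding edge_degree_def using finT by (simp add: sum.inter_filter[symmetric])
  also have "\<dots> = (\<Sum>t\<in>T. \<Sum>e\<in>E. if e \<subseteq> t then 1 else 0)" by (rule sum.swap)
  also have "\<dots> = (\<Sum>t\<in>T. card {e\<in>E. e \<subseteq> t})"
    using finE by (simp add: sum.inter_filter[symmetric])
  finally have dc: "(\<Sum>e\<in>E. edge_degree T e) = (\<Sum>t\<in>T. card {e\<in>E. e \<subseteq> t})" .
  have "even (card {e\<in>E. e \<subseteq> t})" if tT: "t \<in> T" for t
  proof -
    obtain a b' c where t: "t = {a,b',c}" and d: "a\<noteq>b'" "a\<noteq>c" "b'\<noteq>c"
      using c3 tT by (metis card_3_iff)
    have eq: "{e\<in>E. e \<subseteq> t} = {e. e \<subseteq> {a,b',c} \<and> card e = 2 \<and> (\<exists>p\<in>e. g p = 1) \<and> (\<exists>q\<in>e. g q = 2)}"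
      unfolding E_def P_def cx_edges_def t using tT t by blast
    have "dist (f a) (f b') = 1" "dist (f b') (f c) = 1" "dist (f c) (f a) = 1"
      using tri tT d unfolding t by auto
    hence "{g a, g b', g c} \<noteq> {1,2,3}" using assms(3) unfolding rainbow_triangle_def g_def by blast
    then show ?thesis unfolding eq
      by (rule tri_even[OF d]) (use assms(2) g_def in auto)
  qed
  hence ev: "even (\<Sum>e\<in>E. edge_degree T e)" unfolding dc by (simp add: dvd_sum)
  have deg12: "edge_degree T e = 1 \<or> edge_degree T e = 2" if "e \<in> E" for e
    using cs that unfolding compact_surface_complex_def E_def by auto
  have "(\<Sum>e\<in>E. edge_degree T e) = (\<Sum>e\<in>E. (if edge_degree T e = 1 then 1 else 0) + (if edge_degree T e = 1 then 0 else 2))"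
  proof (rule sum.cong)
    fix e assume "e \<in> E"
    then show "edge_degree T e = (if edge_degree T e = 1 then 1 else 0) + (if edge_degree T e = 1 then 0 else 2)"
      using deg12[OF \<open>e \<in> E\<close>] by auto
  qed simp
  also have "\<dots> = card {e\<in>E. edge_degree T e = 1} + (\<Sum>e\<in>E. (if edge_degree T e = 1 then 0 else 2))"
    using finE by (simp add: sum.distrib sum.inter_filter[symmetric])
  finally have s: "(\<Sum>e\<in>E. edge_degree T e) = card {e\<in>E. edge_degree T e = 1} + (\<Sum>e\<in>E. (if edge_degree T e = 1 then 0 else 2::nat))" .
  have ev2: "even (\<Sum>e\<in>E. (if edge_degree T e = 1 then 0 else 2::nat))" by (simp add: dvd_sum)
  have bd4: "boundary_edges T = {{b!0,b!1},{b!1,b!2},{b!2,b!3},{b!3,b!0}}"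
  proof -
    have "boundary_edges T = {(\<lambda>i. {b ! i, b ! ((i + 1) mod 4)}) i | i. i < 4}"
      unfolding bd lb by simp
    also have "\<dots> = {{b!0,b!1},{b!1,b!2},{b!2,b!3},{b!3,b!0}}"
    proof -
      have m: "(0+1) mod 4 = (1::nat)" "(1+1) mod 4 = (2::nat)" "(2+1) mod 4 = (3::nat)" "(3+1) mod 4 = (0::nat)"
        by simp_all
      have F: "{b ! 0, b ! ((0 + 1) mod 4)} = {b!0,b!1}" "{b ! 1, b ! ((1 + 1) mod 4)} = {b!1,b!2}"
        "{b ! 2, b ! ((2 + 1) mod 4)} = {b!2,b!3}" "{b ! 3, b ! ((3 + 1) mod 4)} = {b!3,b!0}"
        by (simp_all only: m)
      show ?thesis by (simp only: four_set F)
    qed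
    finally show ?thesis .
  qed
  have g0: "g (b!0) = 1" "g (b!1) = 1" "g (b!2) = 2" "g (b!3) = 3"
    using fb assms(4-7) lb unfolding g_def by auto
  have "{e\<in>E. edge_degree T e = 1} = {e \<in> boundary_edges T. P e}"
    unfolding E_def boundary_edges_def by auto
  also have "\<dots> = {{b!1,b!2}}"
  proof -
    have ne: "(1::nat)\<noteq>2" "(3::nat)\<noteq>1" "(3::nat)\<noteq>2" "(2::nat)\<noteq>1" by simp_all
    have p1a: "\<not> P {b!0,b!1}" using g0 by (auto simp: P_def)
    have p1b: "P {b!1,b!2}" using g0 by (auto simp: P_def)
    have p1c: "\<not> P {b!2,b!3}" using g0 by (auto simp: P_def)
    have p1d: "\<not> P {b!3,b!0}" using g0 by (auto simp: P_def)
    note p1 = p1a p1b p1c p1d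
    show ?thesis unfolding bd4 using p1 by blast
  qed
  finally have "card {e\<in>E. edge_degree T e = 1} = 1" by simp
  with s ev ev2 show False by simp
qed

end
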